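(* Let $P^v_i$ ($i=1,\dots,n$, $v\in\mathbb{R}^n$) be the extremal polynomials of the free nilpotent Lie group of rank $r\ge2$ and step $s\ge2$ with respect to a Hall–Grayson–Grossman basis $X_1,\dots,X_n$. Then: (i) if $i,\ell\in\{1,\dots,n\}$ satisfy $i\prec\ell$ and $v_\ell\neq0$, then $P^v_i$ is not the zero polynomial; (ii) if $v\in\mathbb{R}^n$ is such that $P^v_i=0$ (as a polynomial) for all $i=1,\dots,r$, then $v=0$; (iii) for all $i=1,\dots,n$ and $v\in\mathbb{R}^n$, $P^v_i(0)=v_i$.
   Context: Multi-indices $\mathcal I=\mathbb{N}^n$ with $|\alpha|$, $\alpha!$, $x^\alpha$. Hall basis of the free nilpotent Lie algebra $\mathfrak g$ (rank $r$, step $s$, dimension $n$): start from a basis $X_1,\dots,X_r$ of the first layer (degree 1); inductively the degree-$d$ elements are brackets $[X_i,X_j]$ of earlier elements with $i>j$, $d(i)+d(j)=d$, and, if $X_i$ was constructed as $[X_h,X_k]$, then $k\le j$; list them after lower-degree elements. Strings: $(\ell)$ for $\ell\le r$; for $X_\ell=[X_a,X_b]$, the string of $a$ followed by $b$. With string $(\ell_0,\dots,\ell_h)$, $I(\ell)_j=\#\{1\le p\le h:\ell_p=j\}$; $j\prec\ell$ iff the string of $j$ is an initial segment of that of $\ell$. $[Y,X_\alpha]$ is the left-nested bracket of $Y$ with $X_1$ ($\alpha_1$ times), ..., $X_n$ ($\alpha_n$ times), $[Y,X_0]=Y$. Realization on $\mathbb{R}^n$: $X_i=\sum_{\ell:\,i\prec\ell}\frac{(-1)^{|I(\ell)|}}{I(\ell)!}x^{I(\ell)}\partial_{x_\ell}$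 ($i\le r$), and $X_\ell=[X_a,X_b]$ for $\ell>r$ constructed as $[X_a,X_b]$; these form a Lie algebra of vector fields isomorphic to $\mathfrak g$. Generalized structure constants $c^k_{i\alpha}$: $[X_i,X_\alpha]=\sum_kc^k_{i\alpha}X_k$. Extremal polynomials: $P^v_i(x)=\sum_{\alpha\in\mathcal I}\frac{(-1)^{|\alpha|}}{\alpha!}\big(\sum_kc^k_{i\alpha}v_k\big)x^\alpha$. *)

theory Defs
  imports "HOL-Analysis.Analysis"
begin

text \<open>A Hall basis X_1..X_n is described by the indices 1..r (first layer) and,
for r < l \<le> n, the pair br l = (a,b) meaning X_l = [X_a, X_b].\<close>

type_synonym hall = "nat \<Rightarrow> nat \<times> nat"

text \<open>Strings (recursion with fuel; called with fuel l, which suffices since a < l).\<close>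
fun hstr :: "nat \<Rightarrow> hall \<Rightarrow> nat \<Rightarrow> nat \<Rightarrow> nat list" where
  "hstr r br 0 l = [l]"
| "hstr r br (Suc k) l =
     (if l \<le> r then [l] else hstr r br k (fst (br l)) @ [snd (br l)])"

definition hstring :: "nat \<Rightarrow> hall \<Rightarrow> nat \<Rightarrow> nat list" where
  "hstring r br l = hstr r br l l"

fun hdg :: "nat \<Rightarrow> hall \<Rightarrow> nat \<Rightarrow> nat \<Rightarrow> nat" where
  "hdg r br 0 l = 1"
| "hdg r br (Suc k) l =
     (if l \<le> r then 1 else hdg r br k (fst (br l)) + hdg r br k (snd (br l)))"

definition hdeg :: "nat \<Rightarrow> hall \<Rightarrow> nat \<Rightarrow> nat" where
  "hdeg r br l = hdg r br l l"

definition hall_basis :: "nat \<Rightarrow> nat \<Rightarrow> nat \<Rightarrow> hall \<Rightarrow> bool" where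
  "hall_basis r s n br \<longleftrightarrow>
     r \<le> n \<and>
     (\<forall>l\<in>{r<..n}. 1 \<le> snd (br l) \<and> snd (br l) < fst (br l) \<and> fst (br l) < l \<and>
        (r < fst (br l) \<longrightarrow> snd (br (fst (br l))) \<le> snd (br l))) \<and>
     (\<forall>l\<in>{1..n}. hdeg r br l \<le> s) \<and>
     (\<forall>l\<in>{1..n}. \<forall>l'\<in>{1..n}. l \<le> l' \<longrightarrow> hdeg r br l \<le> hdeg r br l') \<and>
     inj_on br {r<..n} \<and>
     (\<forall>a\<in>{1..n}. \<forall>b\<in>{1..n}.
        b < a \<and> hdeg r br a + hdeg r br b \<le> s \<and> (r < a \<longrightarrow> snd (br a) \<le> b)
        \<longrightarrow> (\<exists>l\<in>{r<..n}. br l = (a, b)))"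

definition hprec :: "nat \<Rightarrow> hall \<Rightarrow> nat \<Rightarrow> nat \<Rightarrow> bool" where
  "hprec r br j l \<longleftrightarrow> (\<exists>zs. hstring r br l = hstring r br j @ zs)"

text \<open>I(l)_j = number of occurrences of j among l_1..l_h.\<close>
definition hI :: "nat \<Rightarrow> hall \<Rightarrow> nat \<Rightarrow> nat \<Rightarrow> nat" where
  "hI r br l j = count_list (tl (hstring r br l)) j"

text \<open>Vector fields on R^n: component l, evaluated at a point x (coordinates x 1..x n).\<close>
type_synonym vf = "nat \<Rightarrow> (nat \<Rightarrow> real) \<Rightarrow> real"

definition pd :: "nat \<Rightarrow> ((nat \<Rightarrow> real) \<Rightarrow> real) \<Rightarrow> (nat \<Rightarrow> real) \<Rightarrow> real" where
  "pd j f x = deriv (\<lambda>t. f (x(j := t))) (x j)"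

text \<open>[X,Y] = XY - YX as derivations.\<close>
definition vf_bracket :: "nat \<Rightarrow> vf \<Rightarrow> vf \<Rightarrow> vf" where
  "vf_bracket n X Y = (\<lambda>l x. \<Sum>j=1..n. X j x * pd j (Y l) x - Y j x * pd j (X l) x)"

definition gen_vf :: "nat \<Rightarrow> nat \<Rightarrow> hall \<Rightarrow> nat \<Rightarrow> vf" where
  "gen_vf n r br i = (\<lambda>l x.
     if l \<in> {1..n} \<and> hprec r br i l
     then (-1) ^ (\<Sum>j=1..n. hI r br l j) / (\<Prod>j=1..n. fact (hI r br l j))
          * (\<Prod>j=1..n. x j ^ hI r br l j)
     else 0)"

fun hvf_aux :: "nat \<Rightarrow> nat \<Rightarrow> hall \<Rightarrow> nat \<Rightarrow> nat \<Rightarrow> vf" where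
  "hvf_aux n r br 0 l = gen_vf n r br l"
| "hvf_aux n r br (Suc k) l =
     (if l \<le> r then gen_vf n r br l
      else vf_bracket n (hvf_aux n r br k (fst (br l))) (hvf_aux n r br k (snd (br l))))"

definition hvf :: "nat \<Rightarrow> nat \<Rightarrow> hall \<Rightarrow> nat \<Rightarrow> vf" where
  "hvf n r br l = hvf_aux n r br l l"

text \<open>[X_i, X_alpha]: left-nested bracket with X_1 (alpha 1 times), ..., X_n (alpha n times).\<close>
definition nested :: "nat \<Rightarrow> nat \<Rightarrow> hall \<Rightarrow> nat \<Rightarrow> (nat \<Rightarrow> nat) \<Rightarrow> vf" where
  "nested n r br i \<alpha> =
     fold (\<lambda>j Y. ((\<lambda>Z. vf_bracket n Z (hvf n r br j)) ^^ \<alpha> j) Y) [1..<n+1] (hvf n r br i)"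

definition multi_idx :: "nat \<Rightarrow> (nat \<Rightarrow> nat) set" where
  "multi_idx n = {\<alpha>. \<forall>j. j \<notin> {1..n} \<longrightarrow> \<alpha> j = 0}"

definition sconst :: "nat \<Rightarrow> nat \<Rightarrow> hall \<Rightarrow> nat \<Rightarrow> (nat \<Rightarrow> nat) \<Rightarrow> nat \<Rightarrow> real" where
  "sconst n r br i \<alpha> = (THE c. (\<forall>k. k \<notin> {1..n} \<longrightarrow> c k = 0) \<and>
      (\<forall>l\<in>{1..n}. \<forall>x. nested n r br i \<alpha> l x = (\<Sum>k=1..n. c k * hvf n r br k l x)))"

text \<open>Extremal polynomial P^v_i, represented by its coefficient family over multi-indices.\<close>
definition ext_poly :: "nat \<Rightarrow> nat \<Rightarrow> hall \<Rightarrow> nat \<Rightarrow> (nat \<Rightarrow> real) \<Rightarrow> (nat \<Rightarrow> nat) \<Rightarrow> real" where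
  "ext_poly n r br i v = (\<lambda>\<alpha>. if \<alpha> \<in> multi_idx n
      then (-1) ^ (\<Sum>j=1..n. \<alpha> j) / (\<Prod>j=1..n. fact (\<alpha> j))
           * (\<Sum>k=1..n. sconst n r br i \<alpha> k * v k)
      else 0)"

definition poly_eval :: "nat \<Rightarrow> ((nat \<Rightarrow> nat) \<Rightarrow> real) \<Rightarrow> (nat \<Rightarrow> real) \<Rightarrow> real" where
  "poly_eval n p x = infsum (\<lambda>\<alpha>. p \<alpha> * (\<Prod>j=1..n. x j ^ \<alpha> j)) (multi_idx n)"

end

theory Submission
  imports Defs
begin

locale HB =
  fixes r s n :: nat and br :: hall
  assumes hb: "hall_basis r s n br"
begin

abbreviation str where "str l \<equiv> hstring r br l"

lemma r_le_n: "r \<le> n" using hb unfolding hall_basis_def by auto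

lemma brc:
  assumes "r < l" "l \<le> n"
  shows "1 \<le> snd (br l)" "snd (br l) < fst (br l)" "fst (br l) < l"
    "r < fst (br l) \<Longrightarrow> snd (br (fst (br l))) \<le> snd (br l)"
  using hb assms unfolding hall_basis_def by auto

lemma br_inj: "inj_on br {r<..n}" using hb unfolding hall_basis_def by auto

lemma hstr_small: "l \<le> r \<Longrightarrow> hstr r br k l = [l]"
  by (cases k) auto

lemma hstr_fuel: "l \<le> n \<Longrightarrow> l \<le> k \<Longrightarrow> hstr r br k l = hstr r br l l"
proof (induction l arbitrary: k rule: less_induct)
  case (less l)
  show ?case
  proof (cases "l \<le> r")
    case True then show ?thesis by (simp add: hstr_small)
  next
    case False
    then obtain k' where k: "k = Suc k'" using less.prems by (cases k) auto
    obtain l' where l: "l = Suc l'" using False by (cases l) auto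
    have a: "fst (br l) < l" using brc[of l] False less.prems by auto
    then have 1: "hstr r br k' (fst (br l)) = hstr r br (fst (br l)) (fst (br l))"
      using less.IH[of "fst (br l)" k'] less.prems k l by linarith
    have 2: "hstr r br l' (fst (br l)) = hstr r br (fst (br l)) (fst (br l))"
      using less.IH[of "fst (br l)" l'] less.prems a l by linarith
    have "hstr r br k l = hstr r br k' (fst (br l)) @ [snd (br l)]" using False k by simp
    moreover have "hstr r br l l = hstr r br l' (fst (br l)) @ [snd (br l)]" using False l by simp
    ultimately show ?thesis using 1 2 by simp
  qed
qed

lemma str_small: "l \<le> r \<Longrightarrow> str l = [l]"
  unfolding hstring_def by (simp add: hstr_small)

lemma str_rec: assumes "r < l" "l \<le> n"
  shows "str l = str (fst (br l)) @ [snd (br l)]"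
proof -
  obtain l' where l: "l = Suc l'" using assms by (cases l) auto
  have a: "fst (br l) < l" using brc assms by auto
  have "hstr r br l' (fst (br l)) = str (fst (br l))"
    unfolding hstring_def using hstr_fuel[of "fst (br l)" l'] a assms l by auto
  then show ?thesis using assms l unfolding hstring_def by simp
qed

lemma hstr_ne: "hstr r br k l \<noteq> []"
  by (induction k arbitrary: l) auto

lemma str_ne: "str l \<noteq> []" unfolding hstring_def by (rule hstr_ne)

lemma str_set: "l \<in> {1..n} \<Longrightarrow> set (str l) \<subseteq> {1..n}"
proof (induction l rule: less_induct)
  case (less l)
  show ?case
  proof (cases "l \<le> r")
    case True then show ?thesis using less.prems by (simp add: str_small)
  next
    case False
    then have "fst (br l) \<in> {1..n}" "snd (br l) \<in> {1..n}" "fst (br l) < l"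
      using brc[of l] less.prems by auto
    moreover have "str l = str (fst (br l)) @ [snd (br l)]" using str_rec[of l] False less.prems by simp
    ultimately show ?thesis using less.IH[of "fst (br l)"] less.prems by simp
  qed
qed

lemma str_hd: "l \<in> {1..n} \<Longrightarrow> hd (str l) \<in> {1..r}"
proof (induction l rule: less_induct)
  case (less l)
  show ?case
  proof (cases "l \<le> r")
    case True then show ?thesis using less.prems by (simp add: str_small)
  next
    case False
    then have "fst (br l) \<in> {1..n}" "fst (br l) < l"
      using brc[of l] less.prems by auto
    moreover have "str l = str (fst (br l)) @ [snd (br l)]" using str_rec[of l] False less.prems by simp
    ultimately show ?thesis using less.IH[of "fst (br l)"] less.prems str_ne[of "fst (br l)"] by simp
  qed
qed

lemma str_len: "r < l \<Longrightarrow> l \<le> n \<Longrightarrow> 2 \<le> length (str l)"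
proof -
  assume a: "r < l" "l \<le> n"
  have "length (str (fst (br l))) \<ge> 1" using str_ne[of "fst (br l)"] by (cases "str (fst (br l))") auto
  then show ?thesis using str_rec[OF a] by simp
qed

lemma str_inj: "l \<in> {1..n} \<Longrightarrow> l' \<in> {1..n} \<Longrightarrow> str l = str l' \<Longrightarrow> l = l'"
proof (induction l arbitrary: l' rule: less_induct)
  case (less l)
  show ?case
  proof (cases "l \<le> r")
    case True
    then have "str l' = [l]" using less.prems by (simp add: str_small)
    then have "length (str l') = 1" by simp
    then have "l' \<le> r" using str_len[of l'] less.prems by fastforce
    then show ?thesis using True less.prems by (simp add: str_small)
  next
    case False
    then have "length (str l') \<noteq> 1" using less.prems str_len[of l] by auto
    then have l': "r < l'" using str_small[of l'] by fastforce
    have e: "str (fst (br l)) = str (fst (br l'))" "snd (br l) = snd (br l')"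
      using less.prems False l' str_rec[of l] str_rec[of l'] by auto
    have "fst (br l) \<in> {1..n}" "fst (br l') \<in> {1..n}" "fst (br l) < l"
      using brc[of l] brc[of l'] less.prems False l' by auto
    then have "fst (br l) = fst (br l')" using less.IH e by blast
    then have "br l = br l'" using e by (simp add: prod_eq_iff)
    then show ?thesis using br_inj False l' less.prems unfolding inj_on_def by auto
  qed
qed

lemma str_sorted: "l \<in> {1..n} \<Longrightarrow> sorted (tl (str l)) \<and> (r < l \<longrightarrow> (\<forall>z\<in>set (tl (str l)). z \<le> snd (br l)))"
proof (induction l rule: less_induct)
  case (less l)
  show ?case
  proof (cases "l \<le> r")
    case True then show ?thesis using less.prems by (simp add: str_small)
  next
    case False
    define a where "a = fst (br l)"
    define b where "b = snd (br l)"
    have ab: "a \<in> {1..n}" "a < l" "b < a" using brc[of l] less.prems False a_def b_def by auto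
    have IH: "sorted (tl (str a))" "r < a \<longrightarrow> (\<forall>z\<in>set (tl (str a)). z \<le> snd (br a))"
      using less.IH[OF ab(2) ab(1)] by auto
    have le: "\<forall>z\<in>set (tl (str a)). z \<le> b"
    proof (cases "a \<le> r")
      case True then show ?thesis by (simp add: str_small)
    next
      case False
      then have "snd (br a) \<le> b" using brc(4)[of l] less.prems \<open>\<not> l \<le> r\<close> a_def b_def by auto
      then show ?thesis using IH(2) False by auto
    qed
    have "str l = str a @ [b]" using str_rec[of l] False less.prems a_def b_def by simp
    then have "tl (str l) = tl (str a) @ [b]" using str_ne[of a] by simp
    then show ?thesis using IH(1) le by (auto simp: sorted_append b_def)
  qed
qed

lemma prefix_ge: "i \<in> {1..n} \<Longrightarrow> j \<in> {1..n} \<Longrightarrow> str j = str i @ zs \<Longrightarrow> i \<le> j"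
proof (induction j arbitrary: zs rule: less_induct)
  case (less j)
  show ?case
  proof (cases "zs = []")
    case True then show ?thesis using str_inj[of j i] less.prems by simp
  next
    case False
    have L: "length (str j) \<ge> 2" using less.prems(3) str_ne[of i] False
      by (cases "str i"; cases zs) simp_all
    have "\<not> j \<le> r"
    proof
      assume "j \<le> r" then have "str j = [j]" by (rule str_small)
      with L show False by simp
    qed
    then have "j > r" by simp
    then have e: "str j = str (fst (br j)) @ [snd (br j)]" using str_rec[of j] less.prems(2) by simp
    have "str i @ zs = (str i @ butlast zs) @ [last zs]" using False by simp
    then have "str (fst (br j)) @ [snd (br j)] = (str i @ butlast zs) @ [last zs]"
      using e less.prems(3) by simp
    then have "str (fst (br j)) = str i @ butlast zs" by simp
    moreover have "fst (br j) \<in> {1..n}" "fst (br j) < j" using brc[of j] \<open>j > r\<close> less.prems(2) by auto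
    ultimately have "i \<le> fst (br j)" using less.IH[of "fst (br j)"] less.prems(1) by blast
    then show ?thesis using \<open>fst (br j) < j\<close> by simp
  qed
qed

lemma prefix_struct: "i \<in> {1..n} \<Longrightarrow> l \<in> {1..n} \<Longrightarrow> str l = str i @ s1 # rest
   \<Longrightarrow> s1 < i \<and> 1 \<le> s1"
proof (induction l arbitrary: rest rule: less_induct)
  case (less l)
  have L: "length (str l) \<ge> 2" using less.prems(3) str_ne[of i]
    by (cases "str i") simp_all
  have "\<not> l \<le> r"
  proof
    assume "l \<le> r" then have "str l = [l]" by (rule str_small)
    with L show False by simp
  qed
  then have "l > r" by simp
  then have e: "str l = str (fst (br l)) @ [snd (br l)]" using str_rec[of l] less.prems(2) by simp
  have ab: "fst (br l) \<in> {1..n}" "fst (br l) < l" "snd (br l) < fst (br l)" "1 \<le> snd (br l)"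
    using brc[of l] \<open>l > r\<close> less.prems(2) by auto
  show ?case
  proof (cases "rest = []")
    case True
    then have "str (fst (br l)) = str i" "snd (br l) = s1" using e less.prems(3) by auto
    then have "fst (br l) = i" using str_inj[of "fst (br l)" i] ab less.prems(1) by simp
    then show ?thesis using ab \<open>snd (br l) = s1\<close> by auto
  next
    case False
    have "str i @ s1 # rest = (str i @ s1 # butlast rest) @ [last rest]" using False by simp
    then have "str (fst (br l)) @ [snd (br l)] = (str i @ s1 # butlast rest) @ [last rest]"
      using e less.prems(3) by simp
    then have "str (fst (br l)) = str i @ s1 # butlast rest" by simp
    then show ?thesis using less.IH[of "fst (br l)"] ab less.prems(1) by blast
  qed
qed


abbreviation X where "X l \<equiv> hvf n r br l"

lemma hvf_aux_small: "l \<le> r \<Longrightarrow> hvf_aux n r br k l = gen_vf n r br l"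
  by (cases k) auto

lemma hvf_fuel: "l \<le> n \<Longrightarrow> l \<le> k \<Longrightarrow> hvf_aux n r br k l = hvf_aux n r br l l"
proof (induction l arbitrary: k rule: less_induct)
  case (less l)
  show ?case
  proof (cases "l \<le> r")
    case True then show ?thesis by (simp add: hvf_aux_small)
  next
    case False
    then obtain k' where k: "k = Suc k'" using less.prems by (cases k) auto
    obtain l' where l: "l = Suc l'" using False by (cases l) auto
    have a: "fst (br l) < l" "snd (br l) < l" using brc[of l] False less.prems by auto
    have 1: "hvf_aux n r br k' (fst (br l)) = hvf_aux n r br (fst (br l)) (fst (br l))"
      using less.IH[of "fst (br l)" k'] less.prems k l a by linarith
    have 2: "hvf_aux n r br l' (fst (br l)) = hvf_aux n r br (fst (br l)) (fst (br l))"
      using less.IH[of "fst (br l)" l'] less.prems a l by linarith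
    have 3: "hvf_aux n r br k' (snd (br l)) = hvf_aux n r br (snd (br l)) (snd (br l))"
      using less.IH[of "snd (br l)" k'] less.prems k l a by linarith
    have 4: "hvf_aux n r br l' (snd (br l)) = hvf_aux n r br (snd (br l)) (snd (br l))"
      using less.IH[of "snd (br l)" l'] less.prems a l by linarith
    have "hvf_aux n r br k l = vf_bracket n (hvf_aux n r br k' (fst (br l))) (hvf_aux n r br k' (snd (br l)))"
      using False k by simp
    moreover have "hvf_aux n r br l l = vf_bracket n (hvf_aux n r br l' (fst (br l))) (hvf_aux n r br l' (snd (br l)))"
      using False l by simp
    ultimately show ?thesis using 1 2 3 4 by simp
  qed
qed

lemma hvf_small: "l \<le> r \<Longrightarrow> X l = gen_vf n r br l"
  unfolding hvf_def by (simp add: hvf_aux_small)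

lemma hvf_rec: assumes "r < l" "l \<le> n"
  shows "X l = vf_bracket n (X (fst (br l))) (X (snd (br l)))"
proof -
  obtain l' where l: "l = Suc l'" using assms by (cases l) auto
  have a: "fst (br l) < l" "snd (br l) < l" using brc(2,3)[OF assms] by auto
  have "hvf_aux n r br l' (fst (br l)) = X (fst (br l))"
    unfolding hvf_def using hvf_fuel[of "fst (br l)" l'] a assms l by auto
  moreover have "hvf_aux n r br l' (snd (br l)) = X (snd (br l))"
    unfolding hvf_def using hvf_fuel[of "snd (br l)" l'] a assms l by auto
  ultimately show ?thesis using assms l unfolding hvf_def by simp
qed

definition Jc where "Jc k l j = count_list (drop (length (str k)) (str l)) j"
definition Fc :: "nat \<Rightarrow> nat \<Rightarrow> real" where
  "Fc k l = (-1) ^ (\<Sum>j=1..n. Jc k l j) / (\<Prod>j=1..n. fact (Jc k l j))"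
definition F :: "nat \<Rightarrow> vf" where
  "F k = (\<lambda>l x. if l \<in> {1..n} \<and> hprec r br k l then Fc k l * (\<Prod>j=1..n. x j ^ Jc k l j) else 0)"

lemma gen_F: "i \<le> r \<Longrightarrow> gen_vf n r br i = F i"
proof -
  assume "i \<le> r"
  then have "length (str i) = 1" by (simp add: str_small)
  then have "Jc i l j = hI r br l j" for l j
    unfolding Jc_def hI_def by (simp add: drop_Suc)
  then show ?thesis unfolding gen_vf_def F_def Fc_def by (intro ext) simp
qed

lemma Jc_app: "str l = str k @ zs \<Longrightarrow> Jc k l j = count_list zs j"
  unfolding Jc_def by simp

lemma pd_mono:
  assumes "j \<in> {1..n}"
  shows "pd j (\<lambda>x. c * (\<Prod>i\<in>{1..n}. x i ^ J i)) x
       = c * (real (J j) * x j ^ (J j - 1)) * (\<Prod>i\<in>{1..n}-{j}. x i ^ J i)"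
proof -
  have "(\<lambda>t. c * (\<Prod>i\<in>{1..n}. (x(j := t)) i ^ J i))
      = (\<lambda>t. c * (t ^ J j * (\<Prod>i\<in>{1..n}-{j}. x i ^ J i)))"
  proof
    fix t
    have "(\<Prod>i\<in>{1..n}. (x(j := t)) i ^ J i) = (x(j := t)) j ^ J j * (\<Prod>i\<in>{1..n}-{j}. (x(j := t)) i ^ J i)"
      using assms by (simp add: prod.remove)
    also have "(\<Prod>i\<in>{1..n}-{j}. (x(j := t)) i ^ J i) = (\<Prod>i\<in>{1..n}-{j}. x i ^ J i)"
      by (rule prod.cong) auto
    finally show "c * (\<Prod>i\<in>{1..n}. (x(j := t)) i ^ J i) = c * (t ^ J j * (\<Prod>i\<in>{1..n}-{j}. x i ^ J i))"
      by simp
  qed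
  moreover have "((\<lambda>t. c * (t ^ J j * (\<Prod>i\<in>{1..n}-{j}. x i ^ J i))) has_field_derivative
      c * (real (J j) * x j ^ (J j - 1)) * (\<Prod>i\<in>{1..n}-{j}. x i ^ J i)) (at (x j))"
  proof -
    let ?K = "\<Prod>i\<in>{1..n}-{j}. x i ^ J i"
    have "((\<lambda>t. (c * ?K) * t ^ J j) has_field_derivative (c * ?K) * (real (J j) * x j ^ (J j - 1))) (at (x j))"
      by (intro DERIV_cmult) (use DERIV_pow[of "J j" "x j" UNIV] in simp)
    moreover have "(\<lambda>t. (c * ?K) * t ^ J j) = (\<lambda>t. c * (t ^ J j * ?K))" by (auto simp: algebra_simps)
    ultimately show ?thesis by (simp add: algebra_simps)
  qed
  ultimately show ?thesis unfolding pd_def using DERIV_imp_deriv by simp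
qed

lemma pd_F_pos:
  assumes "j \<in> {1..n}" "l \<in> {1..n}" "hprec r br k l"
  shows "pd j (F k l) x =
     Fc k l * (real (Jc k l j) * x j ^ (Jc k l j - 1)) * (\<Prod>i\<in>{1..n}-{j}. x i ^ Jc k l i)"
proof -
  have "F k l = (\<lambda>x. Fc k l * (\<Prod>i\<in>{1..n}. x i ^ Jc k l i))" unfolding F_def using assms by simp
  then show ?thesis using pd_mono[OF assms(1)] by simp
qed

lemma F_neg: "\<not> (l \<in> {1..n} \<and> hprec r br k l) \<Longrightarrow> F k l x = 0"
  unfolding F_def by (rule if_not_P)

lemma pd_F_neg:
  assumes "\<not> (l \<in> {1..n} \<and> hprec r br k l)"
  shows "pd j (F k l) x = 0"
proof -
  have "F k l = (\<lambda>x. 0)" using F_neg[OF assms] by (intro ext)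
  then show ?thesis unfolding pd_def by simp
qed

lemma prod_van:
  assumes "p \<in> A" "finite A" "x p = (0::real)" "1 \<le> J p"
  shows "(\<Prod>i\<in>A. x i ^ J i) = 0"
proof -
  have "x p ^ J p = 0" using assms(3,4) by (simp add: power_0_left)
  show ?thesis
    apply (rule prod_zero[OF assms(2)])
    apply (rule bexI[of _ p])
    using assms(1) \<open>x p ^ J p = 0\<close> by auto
qed

lemma prec_ge: "k \<in> {1..n} \<Longrightarrow> j \<in> {1..n} \<Longrightarrow> hprec r br k j \<Longrightarrow> k \<le> j"
proof -
  assume a: "k \<in> {1..n}" "j \<in> {1..n}" "hprec r br k j"
  then obtain zs where "str j = str k @ zs" unfolding hprec_def by blast
  then show ?thesis using prefix_ge[OF a(1,2)] by blast
qed

lemma F_lt: "k \<in> {1..n} \<Longrightarrow> j < k \<Longrightarrow> F k j x = 0"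
proof -
  assume a: "k \<in> {1..n}" "j < k"
  have "\<not> (j \<in> {1..n} \<and> hprec r br k j)" using prec_ge[OF a(1)] a(2) by fastforce
  then show ?thesis by (rule F_neg)
qed

lemma F_self: "b \<in> {1..n} \<Longrightarrow> F b b x = 1"
proof -
  assume b: "b \<in> {1..n}"
  have p: "hprec r br b b" unfolding hprec_def by auto
  have "Jc b b j = 0" for j unfolding Jc_def by simp
  then show ?thesis using b p unfolding F_def Fc_def by simp
qed

lemma F_T2:
  assumes b: "b \<in> {1..n}" and j: "j \<in> {1..n}" "j \<noteq> b"
    and x: "\<forall>i. 1 \<le> i \<and> i < b \<longrightarrow> x i = 0"
  shows "F b j x = 0"
proof (cases "hprec r br b j")
  case True
  then obtain zs where zs: "str j = str b @ zs" unfolding hprec_def by auto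
  have "zs \<noteq> []" using str_inj[of j b] zs b j by auto
  then obtain s1 rest where zs2: "zs = s1 # rest" by (cases zs) auto
  then have s1: "s1 < b" "1 \<le> s1" using prefix_struct[of b j s1 rest] b j zs by auto
  have "(\<Prod>i=1..n. x i ^ Jc b j i) = 0"
    by (rule prod_van[where p=s1]) (use s1 b x zs zs2 Jc_app[OF zs] in auto)
  then show ?thesis unfolding F_def by simp
next
  case False then show ?thesis unfolding F_def by simp
qed

lemma F_T1:
  assumes a: "a \<in> {1..n}" and b: "b \<in> {1..n}" and ab: "b < a" and j: "j \<in> {1..n}"
    and x: "\<forall>i. 1 \<le> i \<and> i < b \<longrightarrow> x i = 0"
  shows "F a j x * pd j (F b l) x = 0"
proof (cases "hprec r br a j")
  case False then show ?thesis unfolding F_def by simp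
next
  case True
  then have ja: "a \<le> j" using prec_ge a j by blast
  have "pd j (F b l) x = 0"
  proof (cases "l \<in> {1..n} \<and> hprec r br b l")
    case False then show ?thesis using pd_F_neg by blast
  next
    case True
    then obtain S where S: "str l = str b @ S" unfolding hprec_def by auto
    show ?thesis
    proof (cases S)
      case Nil
      then have "Jc b l j = 0" using Jc_app[OF S] by simp
      then show ?thesis using pd_F_pos[OF j] True by simp
    next
      case (Cons s1 rest)
      then have s1: "s1 < b" "1 \<le> s1" using prefix_struct[of b l s1 rest] b True S by auto
      have "(\<Prod>i\<in>{1..n}-{j}. x i ^ Jc b l i) = 0"
        by (rule prod_van[where p=s1]) (use s1 b x S Cons ja ab Jc_app[OF S] in auto)
      then show ?thesis using pd_F_pos[OF j] True by simp
    qed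
  qed
  then show ?thesis by simp
qed


lemma str_drop_sorted:
  assumes "l \<in> {1..n}" "str l = str a @ R"
  shows "sorted R"
proof -
  have "R = drop (length (str a)) (str l)" using assms(2) by simp
  also have "\<dots> = drop (length (str a) - 1) (tl (str l))"
    using str_ne[of a] by (cases "length (str a)") (auto simp: drop_Suc)
  finally show ?thesis using str_sorted[OF assms(1)] by (simp add: sorted_wrt_drop)
qed

lemma fact_pos_prod: "(\<Prod>i\<in>A. (fact (f i) :: real)) \<noteq> 0"
  by (induction A rule: infinite_finite_induct) auto

lemma F_T3:
  assumes k: "r < k" "k \<le> n" and x: "\<forall>i. 1 \<le> i \<and> i < snd (br k) \<longrightarrow> x i = 0"
  shows "- pd (snd (br k)) (F (fst (br k)) l) x = F k l x"
proof -
  define a where "a = fst (br k)"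
  define b where "b = snd (br k)"
  have ab: "a \<in> {1..n}" "b \<in> {1..n}" "b < a" using brc[OF k] a_def b_def k(2) by auto
  have sk: "str k = str a @ [b]" using str_rec[OF k] a_def b_def by simp
  have x': "\<forall>i. 1 \<le> i \<and> i < b \<longrightarrow> x i = 0" using x b_def by simp
  show ?thesis unfolding a_def[symmetric] b_def[symmetric]
  proof (cases "l \<in> {1..n} \<and> hprec r br a l")
    case False
    have "\<not> (l \<in> {1..n} \<and> hprec r br k l)"
    proof
      assume h: "l \<in> {1..n} \<and> hprec r br k l"
      then obtain zs where "str l = str k @ zs" unfolding hprec_def by blast
      then have "str l = str a @ (b # zs)" using sk by simp
      then show False using False h unfolding hprec_def by blast
    qed
    then show "- pd b (F a l) x = F k l x" using pd_F_neg[OF False] F_neg by simp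
  next
    case True
    then obtain R where R: "str l = str a @ R" unfolding hprec_def by blast
    have JR: "Jc a l i = count_list R i" for i using Jc_app[OF R] by simp
    have pdv: "pd b (F a l) x = Fc a l * (real (count_list R b) * x b ^ (count_list R b - 1))
        * (\<Prod>i\<in>{1..n}-{b}. x i ^ count_list R i)"
      using pd_F_pos[OF ab(2) conjunct1[OF True] conjunct2[OF True]] JR by simp
    show "- pd b (F a l) x = F k l x"
    proof (cases "\<exists>Q. R = b # Q")
      case True
      then obtain Q where Q: "R = b # Q" by blast
      have sl: "str l = str k @ Q" using R Q sk by simp
      have pk: "hprec r br k l" using sl unfolding hprec_def by blast
      have JQ: "Jc k l i = count_list Q i" for i using Jc_app[OF sl] by simp
      define c where "c = count_list Q b"
      define SQ where "SQ = (\<Sum>i\<in>{1..n}-{b}. count_list Q i)"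
      define PQ where "PQ = (\<Prod>i\<in>{1..n}-{b}. (fact (count_list Q i) :: real))"
      define MQ where "MQ = (\<Prod>i\<in>{1..n}-{b}. x i ^ count_list Q i)"
      have cR: "count_list R i = (if i = b then Suc (count_list Q i) else count_list Q i)" for i
        using Q by simp
      have eqR: "(\<Prod>i\<in>{1..n}-{b}. x i ^ count_list R i) = MQ" unfolding MQ_def
        by (rule prod.cong) (auto simp: cR)
      have sR: "(\<Sum>i=1..n. count_list R i) = Suc c + SQ"
      proof -
        have "(\<Sum>i=1..n. count_list R i) = count_list R b + (\<Sum>i\<in>{1..n}-{b}. count_list R i)"
          using ab(2) by (simp add: sum.remove)
        also have "(\<Sum>i\<in>{1..n}-{b}. count_list R i) = SQ" unfolding SQ_def
          by (rule sum.cong) (auto simp: cR)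
        finally show ?thesis using cR c_def by simp
      qed
      have sQ: "(\<Sum>i=1..n. count_list Q i) = c + SQ"
        using ab(2) by (simp add: sum.remove c_def SQ_def)
      have pR: "(\<Prod>i=1..n. (fact (count_list R i) :: real)) = fact (Suc c) * PQ"
      proof -
        have "(\<Prod>i=1..n. (fact (count_list R i) :: real)) = fact (count_list R b) * (\<Prod>i\<in>{1..n}-{b}. fact (count_list R i))"
          using ab(2) by (simp add: prod.remove)
        also have "(\<Prod>i\<in>{1..n}-{b}. (fact (count_list R i) :: real)) = PQ" unfolding PQ_def
          by (rule prod.cong) (auto simp: cR)
        finally show ?thesis using cR c_def by simp
      qed
      have pQ: "(\<Prod>i=1..n. (fact (count_list Q i) :: real)) = fact c * PQ"
        using ab(2) by (simp add: prod.remove c_def PQ_def)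
      have mQ: "(\<Prod>i=1..n. x i ^ count_list Q i) = x b ^ c * MQ"
        using ab(2) by (simp add: prod.remove c_def MQ_def)
      have FcA: "Fc a l = (-1) ^ (Suc c + SQ) / (fact (Suc c) * PQ)"
        unfolding Fc_def JR sR pR by simp
      have FcK: "Fc k l = (-1) ^ (c + SQ) / (fact c * PQ)"
        unfolding Fc_def JQ sQ pQ by simp
      have Fk: "F k l x = Fc k l * (x b ^ c * MQ)"
        unfolding F_def using conjunct1[OF \<open>l \<in> {1..n} \<and> hprec r br a l\<close>] pk JQ mQ by simp
      have PQ0: "PQ \<noteq> 0" unfolding PQ_def by (rule fact_pos_prod)
      have pdv2: "pd b (F a l) x = Fc a l * (real (Suc c) * x b ^ c) * MQ"
        using pdv eqR cR c_def by simp
      have f: "(fact (Suc c) :: real) = real (Suc c) * fact c" by (simp add: fact_Suc)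
      have "Fc a l * real (Suc c) = (-1) ^ (Suc c + SQ) / (fact c * PQ)"
        unfolding FcA f by (simp del: of_nat_Suc)
      also have "\<dots> = - ((-1) ^ (c + SQ) / (fact c * PQ))" by simp
      finally have "- (Fc a l * real (Suc c)) = Fc k l" unfolding FcK by simp
      moreover have "- (Fc a l * (real (Suc c) * x b ^ c) * MQ) = (- (Fc a l * real (Suc c))) * (x b ^ c * MQ)"
        by (simp only: mult.assoc mult_minus_left)
      ultimately show ?thesis unfolding pdv2 Fk by simp
    next
      case False
      have nk: "\<not> (l \<in> {1..n} \<and> hprec r br k l)"
      proof
        assume h: "l \<in> {1..n} \<and> hprec r br k l"
        then obtain zs where "str l = str k @ zs" unfolding hprec_def by blast
        then have "R = b # zs" using sk R by simp
        then show False using False by blast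
      qed
      have "pd b (F a l) x = 0"
      proof (cases "count_list R b = 0")
        case True then show ?thesis using pdv by simp
      next
        case cnz: False
        then have "b \<in> set R" by (metis count_notin)
        then obtain r1 Q where RQ: "R = r1 # Q" by (cases R) auto
        have "r1 \<noteq> b" using False RQ by blast
        then have "b \<in> set Q" using \<open>b \<in> set R\<close> RQ by simp
        moreover have "sorted R" using str_drop_sorted[OF conjunct1[OF \<open>l \<in> {1..n} \<and> hprec r br a l\<close>] R] .
        ultimately have "r1 \<le> b" using RQ by auto
        then have r1b: "r1 < b" using \<open>r1 \<noteq> b\<close> by simp
        have "r1 \<in> set (str l)" using R RQ by simp
        then have r1n: "r1 \<in> {1..n}" using str_set[OF conjunct1[OF \<open>l \<in> {1..n} \<and> hprec r br a l\<close>]] by blast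
        have "(\<Prod>i\<in>{1..n}-{b}. x i ^ count_list R i) = 0"
          by (rule prod_van[where p=r1]) (use r1n r1b x' RQ \<open>r1 \<noteq> b\<close> in auto)
        then show ?thesis using pdv by simp
      qed
      then show ?thesis using F_neg[OF nk] by simp
    qed
  qed
qed

definition sig where "sig k = (if k \<le> r then 1 else snd (br k))"

lemma main_inv:
  "k \<in> {1..n} \<Longrightarrow> (\<forall>i. 1 \<le> i \<and> i < sig k \<longrightarrow> x i = 0) \<Longrightarrow> X k l x = F k l x"
proof (induction k arbitrary: l x rule: less_induct)
  case (less k)
  show ?case
  proof (cases "k \<le> r")
    case True then show ?thesis by (simp add: hvf_small gen_F)
  next
    case False
    define a where "a = fst (br k)"
    define b where "b = snd (br k)"
    have kk: "r < k" "k \<le> n" using False less.prems by auto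
    have ab: "a \<in> {1..n}" "b \<in> {1..n}" "b < a" "a < k" using brc[OF kk] a_def b_def kk(2) by auto
    have xb: "\<forall>i. 1 \<le> i \<and> i < b \<longrightarrow> x i = 0" using less.prems(2) False unfolding sig_def b_def by simp
    have sa: "sig a \<le> b"
    proof (cases "a \<le> r")
      case True then show ?thesis unfolding sig_def using ab by simp
    next
      case False then show ?thesis unfolding sig_def using brc(4)[OF kk] a_def b_def by simp
    qed
    have sb: "sig b \<le> b"
    proof (cases "b \<le> r")
      case True then show ?thesis unfolding sig_def using ab by simp
    next
      case False
      then have "snd (br b) < fst (br b)" "fst (br b) < b" using brc[of b] ab by auto
      then show ?thesis unfolding sig_def using False by simp
    qed
    have IHa: "X a l' y = F a l' y" if "\<forall>i. 1 \<le> i \<and> i < b \<longrightarrow> y i = 0" for l' y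
      using less.IH[OF ab(4) ab(1)] that sa by auto
    have IHb: "X b l' y = F b l' y" if "\<forall>i. 1 \<le> i \<and> i < b \<longrightarrow> y i = 0" for l' y
      using less.IH[of b] ab that sb by auto
    have "X k l x = (\<Sum>j=1..n. X a j x * pd j (X b l) x - X b j x * pd j (X a l) x)"
      using hvf_rec[OF kk] unfolding vf_bracket_def a_def b_def by simp
    also have "\<dots> = (\<Sum>j=1..n. F a j x * pd j (F b l) x - F b j x * pd j (F a l) x)"
    proof (rule sum.cong[OF refl])
      fix j assume j: "j \<in> {1..n}"
      have e1: "X a j x = F a j x" "X b j x = F b j x" using IHa IHb xb by auto
      show "X a j x * pd j (X b l) x - X b j x * pd j (X a l) x
          = F a j x * pd j (F b l) x - F b j x * pd j (F a l) x"
      proof (cases "j < b")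
        case True
        then have "F a j x = 0" "F b j x = 0" using F_lt ab by auto
        then show ?thesis using e1 by simp
      next
        case False
        have "\<forall>i. 1 \<le> i \<and> i < b \<longrightarrow> (x(j := t)) i = 0" for t using xb False by auto
        then have "(\<lambda>t. X b l (x(j := t))) = (\<lambda>t. F b l (x(j := t)))"
             "(\<lambda>t. X a l (x(j := t))) = (\<lambda>t. F a l (x(j := t)))"
          using IHa IHb by auto
        then have "pd j (X b l) x = pd j (F b l) x" "pd j (X a l) x = pd j (F a l) x"
          unfolding pd_def by simp_all
        then show ?thesis using e1 by simp
      qed
    qed
    also have "\<dots> = (\<Sum>j=1..n. - (F b j x * pd j (F a l) x))"
      by (rule sum.cong[OF refl]) (use F_T1[OF ab(1,2,3) _ xb] in simp)
    also have "\<dots> = - (F b b x * pd b (F a l) x) + (\<Sum>j\<in>{1..n}-{b}. - (F b j x * pd j (F a l) x))"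
      using ab(2) by (simp add: sum.remove)
    also have "(\<Sum>j\<in>{1..n}-{b}. - (F b j x * pd j (F a l) x)) = 0"
      by (rule sum.neutral) (use F_T2[OF ab(2) _ _ xb] in auto)
    also have "- (F b b x * pd b (F a l) x) = F k l x"
      using F_self[OF ab(2)] F_T3[OF kk] xb unfolding a_def b_def by simp
    finally show ?thesis by simp
  qed
qed

lemma F_at0: "k \<in> {1..n} \<Longrightarrow> l \<in> {1..n} \<Longrightarrow> F k l (\<lambda>_. 0) = (if k = l then 1 else 0)"
proof -
  assume k: "k \<in> {1..n}" and l: "l \<in> {1..n}"
  show ?thesis
  proof (cases "hprec r br k l")
    case False
    then have "k \<noteq> l" unfolding hprec_def by auto
    then show ?thesis using F_neg False by simp
  next
    case True
    then obtain zs where zs: "str l = str k @ zs" unfolding hprec_def by blast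
    show ?thesis
    proof (cases zs)
      case Nil
      then have "l = k" using str_inj[OF l k] zs by simp
      then show ?thesis using F_self[OF k] by simp
    next
      case (Cons z zt)
      then have "z \<in> set (str l)" using zs by simp
      then have zn: "z \<in> {1..n}" using str_set[OF l] by blast
      have "k \<noteq> l" using zs Cons by auto
      have "(\<Prod>j=1..n. (\<lambda>_. 0::real) j ^ Jc k l j) = 0"
        by (rule prod_van[where p=z]) (use zn Cons Jc_app[OF zs] in auto)
      then show ?thesis unfolding F_def using \<open>k \<noteq> l\<close> by simp
    qed
  qed
qed

lemma X_at0: "k \<in> {1..n} \<Longrightarrow> l \<in> {1..n} \<Longrightarrow> X k l (\<lambda>_. 0) = (if k = l then 1 else 0)"
  using main_inv[of k "\<lambda>_. 0" l] F_at0 by simp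


lemma sconst_eq:
  assumes m: "m \<in> {1..n}" and h: "\<forall>l\<in>{1..n}. \<forall>x. nested n r br i \<alpha> l x = X m l x"
  shows "sconst n r br i \<alpha> = (\<lambda>k. if k = m then 1 else 0)"
  unfolding sconst_def
proof (rule the_equality)
  have d: "(\<Sum>k=1..n. (if k = m then 1 else 0) * X k l x) = X m l x" for l x
  proof -
    have "(\<Sum>k=1..n. (if k = m then 1 else 0) * X k l x) = (\<Sum>k=1..n. if k = m then X k l x else 0)"
      by (rule sum.cong) auto
    also have "\<dots> = X m l x" using m by (simp add: sum.delta)
    finally show ?thesis .
  qed
  show "(\<forall>k. k \<notin> {1..n} \<longrightarrow> (if k = m then 1 else 0) = (0::real)) \<and>
    (\<forall>l\<in>{1..n}. \<forall>x. nested n r br i \<alpha> l x = (\<Sum>k = 1..n. (if k = m then 1 else 0) * X k l x))"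
    using m h d by auto
next
  fix c :: "nat \<Rightarrow> real"
  assume c: "(\<forall>k. k \<notin> {1..n} \<longrightarrow> c k = 0) \<and>
    (\<forall>l\<in>{1..n}. \<forall>x. nested n r br i \<alpha> l x = (\<Sum>k = 1..n. c k * X k l x))"
  show "c = (\<lambda>k. if k = m then 1 else 0)"
  proof
    fix k
    show "c k = (if k = m then 1 else 0)"
    proof (cases "k \<in> {1..n}")
      case False then show ?thesis using c m by auto
    next
      case True
      have "nested n r br i \<alpha> k (\<lambda>_. 0) = (\<Sum>k' = 1..n. c k' * X k' k (\<lambda>_. 0))" using c True by blast
      also have "\<dots> = (\<Sum>k' = 1..n. if k' = k then c k' else 0)"
        by (rule sum.cong) (use X_at0 True in auto)
      also have "\<dots> = c k" using True by (simp add: sum.delta)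
      finally have "c k = nested n r br i \<alpha> k (\<lambda>_. 0)" by simp
      also have "\<dots> = X m k (\<lambda>_. 0)" using h True by blast
      also have "\<dots> = (if k = m then 1 else 0)" using X_at0[OF m True] by auto
      finally show ?thesis .
    qed
  qed
qed

lemma foldl_rep: "foldl G Y (replicate c m) = ((\<lambda>Z. G Z m) ^^ c) Y"
proof (induction c arbitrary: Y)
  case 0 then show ?case by simp
next
  case (Suc c)
  have "foldl G Y (replicate (Suc c) m) = foldl G (G Y m) (replicate c m)" by simp
  also have "\<dots> = ((\<lambda>Z. G Z m) ^^ c) (G Y m)" by (rule Suc.IH)
  also have "\<dots> = ((\<lambda>Z. G Z m) ^^ Suc c) Y"
    using funpow_swap1[of "\<lambda>Z. G Z m" c Y] by simp
  finally show ?case .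
qed

lemma count_filter: "count_list (filter P xs) j = (if P j then count_list xs j else 0)"
  by (induction xs) auto

lemma split_sorted: "sorted zs \<Longrightarrow> \<forall>z\<in>set zs. m \<le> z \<Longrightarrow>
   zs = replicate (count_list zs m) m @ filter (\<lambda>z. z \<noteq> m) zs"
proof (induction zs)
  case Nil then show ?case by simp
next
  case (Cons z zt)
  show ?case
  proof (cases "z = m")
    case True then show ?thesis using Cons by simp
  next
    case False
    then have "m < z" using Cons.prems by auto
    then have "\<forall>y\<in>set zt. m < y" using Cons.prems by auto
    then have "count_list zt m = 0" "filter (\<lambda>z. z \<noteq> m) zt = zt"
      by (auto simp: count_notin filter_id_conv)
    then show ?thesis using False by simp
  qed
qed

lemma fold_cnt: "sorted zs \<Longrightarrow> set zs \<subseteq> {m..N} \<Longrightarrow>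
  fold (\<lambda>j Y. ((\<lambda>Z. G Z j) ^^ count_list zs j) Y) [m..<Suc N] Y = foldl G Y zs"
proof (induction "Suc N - m" arbitrary: m Y zs)
  case 0
  then have "zs = []" by auto
  then show ?case using 0 by simp
next
  case (Suc d)
  then have mN: "m \<le> N" by simp
  define zs' where "zs' = filter (\<lambda>z. z \<noteq> m) zs"
  have sp: "zs = replicate (count_list zs m) m @ zs'"
  proof -
    have "\<forall>z\<in>set zs. m \<le> z" using Suc.prems(2) by auto
    then show ?thesis using split_sorted[OF Suc.prems(1)] zs'_def by blast
  qed
  have s': "sorted zs'" unfolding zs'_def using Suc.prems(1) by (simp add: sorted_wrt_filter)
  have set': "set zs' \<subseteq> {Suc m..N}" unfolding zs'_def using Suc.prems(2) by force
  have cnt: "count_list zs' j = count_list zs j" if "j \<in> set [Suc m..<Suc N]" for j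
  proof -
    have "Suc m \<le> j" using that by (simp only: set_upt atLeastLessThan_iff)
    then have "j \<noteq> m" by simp
    then show ?thesis unfolding zs'_def count_filter by simp
  qed
  have "fold (\<lambda>j Y. ((\<lambda>Z. G Z j) ^^ count_list zs j) Y) [m..<Suc N] Y
      = fold (\<lambda>j Y. ((\<lambda>Z. G Z j) ^^ count_list zs j) Y) [Suc m..<Suc N] (((\<lambda>Z. G Z m) ^^ count_list zs m) Y)"
  proof -
    have u: "[m..<Suc N] = m # [Suc m..<Suc N]" by (rule upt_conv_Cons) (use mN in simp)
    show ?thesis unfolding u by (simp del: upt_Suc)
  qed
  also have "\<dots> = fold (\<lambda>j Y. ((\<lambda>Z. G Z j) ^^ count_list zs' j) Y) [Suc m..<Suc N] (((\<lambda>Z. G Z m) ^^ count_list zs m) Y)"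
    by (rule fold_cong) (auto simp: cnt)
  also have "\<dots> = foldl G (((\<lambda>Z. G Z m) ^^ count_list zs m) Y) zs'"
    using Suc.hyps(1)[of "Suc m"] Suc.hyps(2) s' set' by simp
  also have "\<dots> = foldl G Y zs"
    by (subst (2) sp) (simp add: foldl_rep)
  finally show ?case .
qed

lemma X_chain: "i \<in> {1..n} \<Longrightarrow> l \<in> {1..n} \<Longrightarrow> str l = str i @ zs \<Longrightarrow>
   X l = foldl (\<lambda>Z j. vf_bracket n Z (X j)) (X i) zs"
proof (induction zs arbitrary: l rule: rev_induct)
  case Nil
  then have "l = i" using str_inj[of l i] by simp
  then show ?case by simp
next
  case (snoc z zs)
  have L: "length (str l) \<ge> 2" using snoc.prems(3) str_ne[of i]
    by (cases "str i") simp_all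
  have "\<not> l \<le> r"
  proof
    assume "l \<le> r" then have "str l = [l]" by (rule str_small)
    with L show False by simp
  qed
  then have kk: "r < l" "l \<le> n" using snoc.prems by auto
  have e: "str l = str (fst (br l)) @ [snd (br l)]" using str_rec[OF kk] .
  then have "str (fst (br l)) = str i @ zs" "snd (br l) = z" using snoc.prems(3) by auto
  moreover have "fst (br l) \<in> {1..n}" using brc[OF kk] kk by auto
  ultimately have "X (fst (br l)) = foldl (\<lambda>Z j. vf_bracket n Z (X j)) (X i) zs"
    using snoc.IH snoc.prems(1) by blast
  then show ?case using hvf_rec[OF kk] \<open>snd (br l) = z\<close> by simp
qed

lemma nested_chain:
  assumes "i \<in> {1..n}" "l \<in> {1..n}" "str l = str i @ zs"
  shows "nested n r br i (count_list zs) = X l"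
proof -
  have "sorted zs" using str_drop_sorted[OF assms(2,3)] .
  moreover have "set zs \<subseteq> {1..n}" using str_set[OF assms(2)] assms(3) by auto
  ultimately have "fold (\<lambda>j Y. ((\<lambda>Z. (\<lambda>Z j. vf_bracket n Z (X j)) Z j) ^^ count_list zs j) Y) [1..<Suc n] (X i)
     = foldl (\<lambda>Z j. vf_bracket n Z (X j)) (X i) zs"
    by (rule fold_cnt)
  then show ?thesis unfolding nested_def using X_chain[OF assms] by simp
qed

lemma fact_prod_nz: "(\<Prod>j=1..n. (fact (f j) :: real)) \<noteq> 0"
  by (rule fact_pos_prod)

lemma partI:
  assumes i: "i \<in> {1..n}" and l: "l \<in> {1..n}" and p: "hprec r br i l" and v: "v l \<noteq> 0"
  shows "ext_poly n r br i v \<noteq> (\<lambda>_. 0)"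
proof
  assume z: "ext_poly n r br i v = (\<lambda>_. 0)"
  obtain zs where zs: "str l = str i @ zs" using p unfolding hprec_def by blast
  have nc: "nested n r br i (count_list zs) = X l" using nested_chain[OF i l zs] .
  have sc: "sconst n r br i (count_list zs) = (\<lambda>k. if k = l then 1 else 0)"
    by (rule sconst_eq[OF l]) (simp add: nc)
  have "set zs \<subseteq> {1..n}" using str_set[OF l] zs by auto
  then have "\<forall>j. j \<notin> {1..n} \<longrightarrow> count_list zs j = 0" by (meson count_notin subsetD)
  then have mi: "count_list zs \<in> multi_idx n" unfolding multi_idx_def by simp
  have sm: "(\<Sum>k=1..n. sconst n r br i (count_list zs) k * v k) = v l"
  proof -
    have "(\<Sum>k=1..n. sconst n r br i (count_list zs) k * v k) = (\<Sum>k=1..n. if k = l then v k else 0)"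
      unfolding sc by (rule sum.cong) auto
    also have "\<dots> = v l" using l by (simp add: sum.delta)
    finally show ?thesis .
  qed
  have "ext_poly n r br i v (count_list zs) = (-1) ^ (\<Sum>j=1..n. count_list zs j) / (\<Prod>j=1..n. fact (count_list zs j)) * v l"
    unfolding ext_poly_def using mi sm by simp
  moreover have "(-1::real) ^ (\<Sum>j=1..n. count_list zs j) / (\<Prod>j=1..n. fact (count_list zs j)) \<noteq> 0"
    using fact_prod_nz[of "count_list zs"] by simp
  ultimately have "ext_poly n r br i v (count_list zs) \<noteq> 0" using v by simp
  then show False using z by simp
qed

lemma partII:
  assumes h: "\<forall>i\<in>{1..r}. ext_poly n r br i v = (\<lambda>_. 0)" and k: "k \<in> {1..n}"
  shows "v k = 0"
proof (rule ccontr)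
  assume v: "v k \<noteq> 0"
  define i where "i = hd (str k)"
  have ir: "i \<in> {1..r}" using str_hd[OF k] i_def by simp
  then have "str i = [i]" by (simp add: str_small)
  then have "str k = str i @ tl (str k)" using str_ne[of k] i_def by simp
  then have "hprec r br i k" unfolding hprec_def by blast
  moreover have "i \<in> {1..n}" using ir r_le_n by auto
  ultimately have "ext_poly n r br i v \<noteq> (\<lambda>_. 0)" using partI k v by blast
  then show False using h ir by blast
qed

lemma partIII:
  assumes i: "i \<in> {1..n}"
  shows "poly_eval n (ext_poly n r br i v) (\<lambda>_. 0) = v i"
proof -
  define a0 :: "nat \<Rightarrow> nat" where "a0 = (\<lambda>_. 0)"
  have a0c: "a0 = count_list []" unfolding a0_def by auto
  have nc: "nested n r br i a0 = X i" unfolding a0c using nested_chain[OF i i] by simp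
  have sc: "sconst n r br i a0 = (\<lambda>k. if k = i then 1 else 0)"
    by (rule sconst_eq[OF i]) (simp add: nc)
  have mi: "a0 \<in> multi_idx n" unfolding multi_idx_def a0_def by simp
  have sm: "(\<Sum>k=1..n. sconst n r br i a0 k * v k) = v i"
  proof -
    have "(\<Sum>k=1..n. sconst n r br i a0 k * v k) = (\<Sum>k=1..n. if k = i then v k else 0)"
      unfolding sc by (rule sum.cong) auto
    also have "\<dots> = v i" using i by (simp add: sum.delta)
    finally show ?thesis .
  qed
  have e0: "ext_poly n r br i v a0 = v i"
    unfolding ext_poly_def using mi sm by (simp add: a0_def)
  define f where "f = (\<lambda>\<alpha>. ext_poly n r br i v \<alpha> * (\<Prod>j=1..n. (\<lambda>_. 0::real) j ^ \<alpha> j))"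
  have "poly_eval n (ext_poly n r br i v) (\<lambda>_. 0) = infsum f (multi_idx n)"
    unfolding poly_eval_def f_def by simp
  also have "\<dots> = infsum f {a0}"
  proof (rule infsum_cong_neutral)
    fix \<alpha> assume "\<alpha> \<in> multi_idx n - {a0}"
    then have am: "\<alpha> \<in> multi_idx n" "\<alpha> \<noteq> a0" by auto
    have "\<exists>j\<in>{1..n}. \<alpha> j \<noteq> 0"
    proof (rule ccontr)
      assume "\<not> (\<exists>j\<in>{1..n}. \<alpha> j \<noteq> 0)"
      then have "\<alpha> = a0" using am(1) unfolding multi_idx_def a0_def by fastforce
      then show False using am(2) by simp
    qed
    then obtain j where j: "j \<in> {1..n}" "\<alpha> j \<noteq> 0" by blast
    have "(\<Prod>j=1..n. (\<lambda>_. 0::real) j ^ \<alpha> j) = 0"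
      by (rule prod_van[where p=j]) (use j in auto)
    then show "f \<alpha> = 0" unfolding f_def by simp
  qed (use mi in auto)
  also have "\<dots> = f a0" by simp
  also have "\<dots> = v i" unfolding f_def using e0 by (simp add: a0_def)
  finally show ?thesis .
qed

end

theorem proposition4p3:
  fixes r s n :: nat and br :: hall
  assumes "2 \<le> r" and "2 \<le> s" and "hall_basis r s n br"
  shows "(\<forall>i\<in>{1..n}. \<forall>l\<in>{1..n}. \<forall>v :: nat \<Rightarrow> real.
            hprec r br i l \<and> v l \<noteq> 0 \<longrightarrow> ext_poly n r br i v \<noteq> (\<lambda>_. 0))
       \<and> (\<forall>v :: nat \<Rightarrow> real. (\<forall>i\<in>{1..r}. ext_poly n r br i v = (\<lambda>_. 0))
            \<longrightarrow> (\<forall>k\<in>{1..n}. v k = 0))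
       \<and> (\<forall>i\<in>{1..n}. \<forall>v :: nat \<Rightarrow> real. poly_eval n (ext_poly n r br i v) (\<lambda>_. 0) = v i)"
proof -
  interpret HB r s n br by (rule HB.intro[OF assms(3)])
  have 1: "\<forall>i\<in>{1..n}. \<forall>l\<in>{1..n}. \<forall>v :: nat \<Rightarrow> real.
            hprec r br i l \<and> v l \<noteq> 0 \<longrightarrow> ext_poly n r br i v \<noteq> (\<lambda>_. 0)"
    using partI by blast
  have 2: "\<forall>v :: nat \<Rightarrow> real. (\<forall>i\<in>{1..r}. ext_poly n r br i v = (\<lambda>_. 0))
            \<longrightarrow> (\<forall>k\<in>{1..n}. v k = 0)"
    using partII by blast
  have 3: "\<forall>i\<in>{1..n}. \<forall>v :: nat \<Rightarrow> real. poly_eval n (ext_poly n r br i v) (\<lambda>_. 0) = v i"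
    using partIII by blast
  show ?thesis using 1 2 3 by blast
qed

end
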